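(* Suppose $pn\ge\log n$. Then for all sufficiently large $n$ and every integer $t$ with $n^{24/25}\le t\le\frac n5$, with probability at least $1-n^{-t/120}$, every set $T$ of $t$ vertices of $G(n,p)$ has at least twice as many edges between $T$ and $[n]\setminus T$ as edges with both endpoints in $T$.
   Context: $G(n,p)$ is the Erdős–Rényi random graph on $[n]$, each edge present independently with probability $p$. *)

theory Defs
  imports "HOL-Probability.Probability"
begin

definition all_edges :: "nat \<Rightarrow> nat set set" where
  "all_edges n = {e. e \<subseteq> {1..n} \<and> card e = 2}"

definition gnp :: "nat \<Rightarrow> real \<Rightarrow> nat set set pmf" where
  "gnp n p = map_pmf (\<lambda>f. {e \<in> all_edges n. f e})
                     (Pi_pmf (all_edges n) False (\<lambda>_. bernoulli_pmf p))"

definition edges_in :: "nat set set \<Rightarrow> nat set \<Rightarrow> nat set set" where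
  "edges_in E T = {e \<in> E. e \<subseteq> T}"

definition edges_between :: "nat set set \<Rightarrow> nat set \<Rightarrow> nat set \<Rightarrow> nat set set" where
  "edges_between E T S = {e \<in> E. \<exists>x y. e = {x, y} \<and> x \<in> T \<and> y \<in> S}"

end

theory Submission
  imports Defs
begin

lemma prob_map: "measure_pmf.prob (map_pmf g M) S = measure_pmf.prob M (g -` S)"
  by (simp add: map_pmf_rep_eq measure_distr)

lemma finite_all_edges: "finite (all_edges n)"
proof -
  have "all_edges n \<subseteq> Pow {1..n}" by (auto simp: all_edges_def)
  thus ?thesis by (rule finite_subset) auto
qed

lemma key:
  fixes n t :: nat and q :: real and T :: "nat set"
  assumes q: "0 \<le> q" "q \<le> 1" and T: "T \<subseteq> {1..n}" "card T = t" "5*t \<le> n"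
  shows "measure_pmf.prob (Pi_pmf (all_edges n) False (\<lambda>_. bernoulli_pmf q))
     {f. \<not> (card (edges_between {e\<in>all_edges n. f e} T ({1..n}-T)) \<ge> 2*card(edges_in {e \<in> all_edges n. f e} T))}
     \<le> exp (- 17/120 * q * t * n)"
proof -
  define A where "A = all_edges n"
  define M where "M = Pi_pmf A False (\<lambda>_. bernoulli_pmf q)"
  have finA: "finite A" unfolding A_def by (rule finite_all_edges)
  define In where "In = {e\<in>A. e \<subseteq> T}"
  define Bt where "Bt = {e\<in>A. \<exists>x y. e={x,y} \<and> x\<in>T \<and> y\<in>{1..n}-T}"
  have disj: "e \<in> Bt \<Longrightarrow> e \<notin> In" for e unfolding Bt_def In_def by auto
  define c where "c e = (if e \<in> In then 9/4 else if e \<in> Bt then 2/3 else (1::real))" for e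
  define h where "h e b = (if b then c e else 1)" for e b
  define W where "W f = (\<Prod>e\<in>A. h e (f e))" for f :: "nat set \<Rightarrow> bool"
  have InA: "In \<subseteq> A" and BtA: "Bt \<subseteq> A" unfolding In_def Bt_def by auto
  have W_eq: "W f = (9/4::real)^card{e\<in>In. f e} * (2/3)^card{e\<in>Bt. f e}" for f
  proof -
    have "W f = (\<Prod>e\<in>A. (if e\<in>In \<and> f e then 9/4 else 1) * (if e\<in>Bt \<and> f e then 2/3 else (1::real)))"
      unfolding W_def h_def c_def by (intro prod.cong) (auto dest: disj)
    also have "\<dots> = (\<Prod>e\<in>{e\<in>A. e\<in>In \<and> f e}. 9/4) * (\<Prod>e\<in>{e\<in>A. e\<in>Bt \<and> f e}. 2/3)"
      unfolding prod.inter_filter[OF finA] by (rule prod.distrib)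
    also have "{e\<in>A. e\<in>In \<and> f e} = {e\<in>In. f e}" using InA by auto
    also have "{e\<in>A. e\<in>Bt \<and> f e} = {e\<in>Bt. f e}" using BtA by auto
    finally show ?thesis by simp
  qed
  have ein: "edges_in {e\<in>A. f e} T = {e\<in>In. f e}" for f
    unfolding edges_in_def In_def by auto
  have ebt: "edges_between {e\<in>A. f e} T ({1..n}-T) = {e\<in>Bt. f e}" for f
    unfolding edges_between_def Bt_def by auto
  have bad_sub: "{f. \<not> (card (edges_between {e\<in>A. f e} T ({1..n}-T)) \<ge> 2*card(edges_in {e \<in> A. f e} T))}
      \<subseteq> {f \<in> space (measure_pmf M). W f \<ge> 1}"
  proof safe
    fix f assume "\<not> card (edges_between {e\<in>A. f e} T ({1..n}-T)) \<ge> 2*card(edges_in {e \<in> A. f e} T)"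
    hence le: "card {e\<in>Bt. f e} \<le> 2 * card {e\<in>In. f e}" unfolding ein ebt by simp
    have "(1::real) = (3/2)^card {e\<in>Bt. f e} * (2/3)^card {e\<in>Bt. f e}"
      by (simp flip: power_mult_distrib)
    also have "\<dots> \<le> (3/2)^(2*card {e\<in>In. f e}) * (2/3)^card {e\<in>Bt. f e}"
      by (intro mult_right_mono power_increasing le) auto
    also have "\<dots> = W f" unfolding W_eq by (simp add: power_mult power2_eq_square)
    finally show "1 \<le> W f" .
  qed simp
  have hnn: "h e b \<ge> 0" for e b unfolding h_def c_def by auto
  have intW: "integrable (measure_pmf M) W" unfolding M_def W_def
    by (intro integrable_prod_Pi_pmf finA integrable_measure_pmf_finite) auto
  have EW: "measure_pmf.expectation M W = (\<Prod>e\<in>A. c e * q + (1 - q))"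
    unfolding M_def W_def
    by (subst expectation_prod_Pi_pmf[OF finA])
       (auto intro!: integrable_measure_pmf_finite hnn prod.cong simp: integral_bernoulli_pmf q h_def c_def)
  have EW2: "(\<Prod>e\<in>A. c e * q + (1 - q)) = (1 + 5*q/4)^card In * (1 - q/3)^card Bt"
  proof -
    have "(\<Prod>e\<in>A. c e * q + (1 - q)) = (\<Prod>e\<in>A. (if e\<in>In then 1 + 5*q/4 else 1) * (if e\<in>Bt then 1 - q/3 else 1))"
      unfolding c_def by (intro prod.cong) (auto dest: disj simp: algebra_simps)
    also have "\<dots> = (\<Prod>e\<in>{e\<in>A. e\<in>In}. 1 + 5*q/4) * (\<Prod>e\<in>{e\<in>A. e\<in>Bt}. 1 - q/3)"
      unfolding prod.inter_filter[OF finA] by (rule prod.distrib)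
    also have "{e\<in>A. e\<in>In} = In" using InA by auto
    also have "{e\<in>A. e\<in>Bt} = Bt" using BtA by auto
    finally show ?thesis by simp
  qed
  have cardIn: "card In = t choose 2"
  proof -
    have "In = {B. B \<subseteq> T \<and> card B = 2}" unfolding In_def A_def all_edges_def using T by auto
    thus ?thesis using n_subsets[of T 2] T finite_subset[OF T(1)] by simp
  qed
  have cardBt: "t * (n - t) \<le> card Bt"
  proof -
    have "(\<lambda>(x,y). {x,y}) ` (T \<times> ({1..n}-T)) \<subseteq> Bt"
      unfolding Bt_def A_def all_edges_def using T by (auto simp: card_insert_if; blast)
    moreover have "inj_on (\<lambda>(x,y). {x,y}) (T \<times> ({1..n}-T))"
      by (auto simp: inj_on_def doubleton_eq_iff)
    moreover have "card (T \<times> ({1..n}-T)) = t * (n - t)"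
      using T by (simp add: card_cartesian_product card_Diff_subset finite_subset)
    moreover have "finite Bt" using BtA finA finite_subset by blast
    ultimately show ?thesis by (metis card_image card_mono)
  qed
  have "measure_pmf.prob M {f. \<not> (card (edges_between {e\<in>A. f e} T ({1..n}-T)) \<ge> 2*card(edges_in {e \<in> A. f e} T))}
      \<le> measure_pmf.prob M {f \<in> space (measure_pmf M). W f \<ge> 1}"
    by (rule measure_pmf.finite_measure_mono[OF bad_sub]) simp
  also have "\<dots> \<le> measure_pmf.expectation M W / 1"
    by (rule integral_Markov_inequality_measure[OF intW]) (auto simp: W_def hnn prod_nonneg)
  also have "\<dots> = (1 + 5*q/4)^card In * (1 - q/3)^card Bt" using EW EW2 by simp
  also have "\<dots> \<le> exp (5*q/4) ^ card In * exp (- q/3) ^ card Bt"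
    using q by (intro mult_mono power_mono) (auto simp del: exp_ge_add_one_self intro: exp_ge_add_one_self[THEN order.trans[rotated]])
  also have "\<dots> = exp (q * (5/4 * card In - 1/3 * card Bt))"
    by (simp add: exp_of_nat_mult[symmetric] exp_add[symmetric] algebra_simps)
  also have "\<dots> \<le> exp (- 17/120 * q * t * n)"
  proof -
    have c2: "2 * card In \<le> t * t" unfolding cardIn choose_two
    proof -
      have "2 * (t * (t - 1) div 2) \<le> t * (t - 1)" by simp
      also have "\<dots> \<le> t * t" by simp
      finally show "2 * (t * (t - 1) div 2) \<le> t * t" .
    qed
    hence c2r: "2 * real (card In) \<le> real t * real t" by (metis of_nat_mult of_nat_le_iff of_nat_numeral)
    have tt: "real t * real t \<le> real t * real n / 5" 
    proof -
      have "5 * real t \<le> real n" using T(3) by linarith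
      hence "real t * (5 * real t) \<le> real t * real n" by (intro mult_left_mono) auto
      thus ?thesis by simp
    qed
    have bt: "real t * real n * 4 / 5 \<le> real (card Bt)"
    proof -
      have "real (t * (n-t)) = real t * (real n - real t)" using T(3) by (simp add: of_nat_diff)
      moreover have "real t * real n * 4 / 5 \<le> real t * (real n - real t)" using tt by (simp add: algebra_simps)
      ultimately show ?thesis using cardBt by (metis of_nat_le_iff order.trans)
    qed
    have "5/4 * real (card In) - 1/3 * real (card Bt) \<le> - 17/120 * real t * real n"
      using c2r tt bt by linarith
    hence "q * (5/4 * real (card In) - 1/3 * real (card Bt)) \<le> q * (- 17/120 * real t * real n)"
      using q by (intro mult_left_mono) auto
    thus ?thesis by (simp add: algebra_simps)
  qed
  finally show ?thesis unfolding M_def A_def .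
qed

lemma pow_fact_le_exp:
  fixes x :: real assumes "0 \<le> x" shows "x ^ k / fact k \<le> exp x"
proof -
  have sm: "(\<lambda>i. x ^ i / fact i) sums exp x"
    using exp_converges[of x] by (simp add: divide_inverse mult.commute)
  have "(\<Sum>i\<in>{k}. x ^ i / fact i) \<le> (\<Sum>i. x ^ i / fact i)"
    by (rule sum_le_suminf[OF sums_summable[OF sm]]) (use assms in auto)
  thus ?thesis using sums_unique[OF sm] by simp
qed

lemma binom_bound:
  assumes "0 < t" shows "real (n choose t) \<le> (exp 1 * real n / real t) ^ t"
proof -
  have a: "real (n choose t) * fact t \<le> real n ^ t"
    using binomial_fact_pow[of n t] by (metis of_nat_fact of_nat_le_iff of_nat_mult of_nat_power)
  have b: "real t ^ t \<le> exp (real t) * fact t"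
    using pow_fact_le_exp[of "real t" t] by (simp add: divide_le_eq)
  have "real (n choose t) * real t ^ t \<le> real (n choose t) * (exp (real t) * fact t)"
    using b by (intro mult_left_mono) auto
  also have "\<dots> \<le> real n ^ t * exp (real t)" using a by (simp add: algebra_simps)
  finally have "real (n choose t) * real t ^ t \<le> real n ^ t * exp (real t)" .
  moreover have "exp (real t) = exp 1 ^ t" by (simp add: exp_of_nat_mult[symmetric])
  ultimately show ?thesis using assms by (simp add: power_divide power_mult_distrib pos_le_divide_eq algebra_simps)
qed

lemma final_arith:
  fixes n t :: nat and q :: real
  assumes n: "exp (75/7) \<le> real n" and t1: "real n powr (24/25) \<le> real t"
    and qn: "q * real n \<ge> ln (real n)"
  shows "real (n choose t) * exp (- 17/120 * q * t * n) \<le> real n powr (- (real t / 120))"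
proof -
  have npos: "0 < real n" using n exp_gt_zero[of "75/7::real"] by linarith
  have n1: "1 \<le> real n" using n by (smt (verit) one_le_exp_iff zero_le_divide_iff)
  have tpos: "0 < real t" using t1 npos by (smt (verit) powr_gt_zero)
  hence t0: "0 < t" by simp
  have e1: "exp (- 17/120 * q * t * n) \<le> (real n powr (-17/120)) ^ t"
  proof -
    have "- 17/120 * q * t * n \<le> - 17/120 * real t * ln (real n)"
      using qn tpos by (simp add: algebra_simps mult_left_mono)
    hence "exp (- 17/120 * q * t * n) \<le> exp (- 17/120 * real t * ln (real n))" by simp
    also have "\<dots> = (real n powr (-17/120)) ^ t"
      using npos by (simp add: powr_def exp_of_nat_mult[symmetric] algebra_simps)
    finally show ?thesis .
  qed
  have e2: "exp 1 * real n / real t \<le> exp 1 * real n powr (1/25)"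
  proof -
    have "real n = real n powr (24/25) * real n powr (1/25)" using npos by (simp add: powr_add[symmetric])
    hence "exp 1 * real n / real t \<le> exp 1 * real n / real n powr (24/25)"
      using t1 npos tpos by (intro divide_left_mono) auto
    also have "\<dots> = exp 1 * (real n powr (24/25) * real n powr (1/25)) / real n powr (24/25)"
      by (rule arg_cong[where f="\<lambda>x. exp 1 * x / real n powr (24/25)"]) fact
    also have "\<dots> = exp 1 * real n powr (1/25)" using npos by simp
    finally show ?thesis .
  qed
  have e3: "exp 1 \<le> real n powr (7/75)"
  proof -
    have "exp 1 = exp (75/7::real) powr (7/75)" by (simp add: powr_def)
    also have "\<dots> \<le> real n powr (7/75)" using n by (intro powr_mono2) auto
    finally show ?thesis .
  qed
  have e4: "exp 1 * real n powr (1/25) * real n powr (-17/120) \<le> real n powr (-1/120)"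
  proof -
    have "real n powr (-1/120) = real n powr (7/75) * (real n powr (1/25) * real n powr (-17/120))"
      using npos by (simp add: powr_add[symmetric])
    thus ?thesis using e3 by (simp add: mult.assoc mult_right_mono)
  qed
  have "real (n choose t) * exp (- 17/120 * q * t * n) \<le> (exp 1 * real n / real t) ^ t * (real n powr (-17/120)) ^ t"
    using binom_bound[OF t0, of n] e1 by (intro mult_mono) auto
  also have "\<dots> \<le> (exp 1 * real n powr (1/25)) ^ t * (real n powr (-17/120)) ^ t"
    using e2 tpos by (intro mult_right_mono power_mono) auto
  also have "\<dots> = (exp 1 * real n powr (1/25) * real n powr (-17/120)) ^ t"
    by (simp add: power_mult_distrib)
  also have "\<dots> \<le> (real n powr (-1/120)) ^ t"
    using e4 by (intro power_mono) auto
  also have "\<dots> = real n powr (- (real t / 120))"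
    using npos by (simp add: powr_realpow[symmetric] powr_powr)
  finally show ?thesis .
qed

theorem mainTheorem17:
  fixes p :: "nat \<Rightarrow> real"
  assumes p_prob: "\<And>n. 0 \<le> p n \<and> p n \<le> 1"
    and p_large: "\<And>n. p n * real n \<ge> ln (real n)"
  shows "\<exists>N. \<forall>n\<ge>N. \<forall>t::nat.
           real n powr (24/25) \<le> real t \<and> real t \<le> real n / 5 \<longrightarrow>
           measure_pmf.prob (gnp n (p n))
             {E. \<forall>T. T \<subseteq> {1..n} \<and> card T = t \<longrightarrow>
                    card (edges_between E T ({1..n} - T)) \<ge> 2 * card (edges_in E T)}
           \<ge> 1 - real n powr (- (real t / 120))"
proof (intro exI allI impI)
  fix n t :: nat
  assume nN: "nat \<lceil>exp (75/7::real)\<rceil> \<le> n"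
  assume tb: "real n powr (24/25) \<le> real t \<and> real t \<le> real n / 5"
  have n: "exp (75/7) \<le> real n" using nN by linarith
  have t5: "5 * t \<le> n" using tb by linarith
  define q where "q = p n"
  have q: "0 \<le> q" "q \<le> 1" using p_prob unfolding q_def by auto
  define A where "A = all_edges n"
  define M where "M = Pi_pmf A False (\<lambda>_. bernoulli_pmf q)"
  define \<T> where "\<T> = {T. T \<subseteq> {1..n} \<and> card T = t}"
  define Bad where "Bad T = {f. \<not> (card (edges_between {e\<in>all_edges n. f e} T ({1..n}-T)) \<ge> 2*card(edges_in {e \<in> all_edges n. f e} T))}" for T
  define S where "S = {E. \<forall>T. T \<subseteq> {1..n} \<and> card T = t \<longrightarrow>
                    card (edges_between E T ({1..n} - T)) \<ge> 2 * card (edges_in E T)}"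
  have finT: "finite \<T>" unfolding \<T>_def by (rule finite_subset[of _ "Pow {1..n}"]) auto
  have cardT: "card \<T> = n choose t" unfolding \<T>_def using n_subsets[of "{1..n}" t] by simp
  have pre: "(\<lambda>f. {e\<in>A. f e}) -` S = space (measure_pmf M) - (\<Union>T\<in>\<T>. Bad T)"
    unfolding S_def Bad_def \<T>_def A_def by auto
  have "measure_pmf.prob (gnp n (p n)) S = measure_pmf.prob M ((\<lambda>f. {e\<in>A. f e}) -` S)"
    unfolding gnp_def M_def A_def q_def by (simp add: map_pmf_rep_eq measure_distr)
  also have "\<dots> = 1 - measure_pmf.prob M (\<Union>T\<in>\<T>. Bad T)"
    unfolding pre by (rule measure_pmf.prob_compl) simp
  finally have eq: "measure_pmf.prob (gnp n (p n)) S = 1 - measure_pmf.prob M (\<Union>T\<in>\<T>. Bad T)" .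
  have "measure_pmf.prob M (\<Union>T\<in>\<T>. Bad T) \<le> (\<Sum>T\<in>\<T>. measure_pmf.prob M (Bad T))"
    by (rule measure_pmf.finite_measure_subadditive_finite[OF finT]) simp
  also have "\<dots> \<le> (\<Sum>T\<in>\<T>. exp (- 17/120 * q * t * n))"
    unfolding M_def A_def Bad_def
    by (intro sum_mono key q t5) (auto simp: \<T>_def)
  also have "\<dots> = real (n choose t) * exp (- 17/120 * q * t * n)" using cardT by simp
  also have "\<dots> \<le> real n powr (- (real t / 120))"
    by (rule final_arith[OF n]) (use tb p_large q_def in auto)
  finally show "measure_pmf.prob (gnp n (p n)) S \<ge> 1 - real n powr (- (real t / 120))"
    using eq by linarith
qed

end
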